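(* Let $\mathcal{Y}=\{y_1,\dots,y_{n+1}\}\subset\mathbb{R}^n$ be affinely independent and $y_0\in\mathbb{R}^n$, with notation as in the context. Then the $(|\mathcal{I}_-|-1)\times(|\mathcal{I}_-|-1)$ matrix $Y_-P_-$ is invertible (when $|\mathcal{I}_-|=1$ this is the empty matrix, regarded as invertible).
   Context: The barycentric coordinates of $y_0$ w.r.t. $\mathcal{Y}$ are the unique reals $\ell_1,\dots,\ell_{n+1}$ with $\sum_{i=1}^{n+1}\ell_i=1$, $\sum_{i=1}^{n+1}\ell_iy_i=y_0$; set $\ell_0=-1$. The points are ordered so that $\ell_1\ge\ell_2\ge\cdots\ge\ell_{n+1}$. Let $\mathcal{I}_+=\{i\in\{0,\dots,n+1\}:\ell_i>0\}=\{1,\dots,|\mathcal{I}_+|\}$ and $\mathcal{I}_-=\{i\in\{0,\dots,n+1\}:\ell_i<0\}=\{0\}\cup\{n+3-|\mathcal{I}_-|,\dots,n+1\}$. Let $G=\sum_{i=0}^{n+1}\ell_iy_iy_i^T$. Let $Y\in\mathbb{R}^{(n+1)\times n}$ have $i$th row $(y_i-y_0)^T$; then $G=Y^T\operatorname{diag}(\ell_1,\dots,\ell_{n+1})Y$. Let $Y_-$ be the submatrix of $Y$ formed by its last $|\mathcal{I}_-|-1$ rows (those indexed by $\mathcal{I}_-\setminus\{0\}$). Let $P_-\in\mathbb{R}^{n\times(|\mathcal{I}_-|-1)}$ be a matrix whose columns are orthonormal eigenvectors of $G$ for its negative eigenvalues (there are $|\mathcal{I}_-|-1$ of them, counted with multiplicity).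 *)

theory Defs
  imports "Jordan_Normal_Form.Matrix"
begin

definition aff_indep :: "nat \<Rightarrow> (nat \<Rightarrow> real vec) \<Rightarrow> bool" where
  "aff_indep n y \<longleftrightarrow>
     (\<forall>c :: nat \<Rightarrow> real.
        (\<Sum>i=1..n+1. c i) = 0 \<and> finsum_vec TYPE(real) n (\<lambda>i. c i \<cdot>\<^sub>v y i) {1..n+1} = 0\<^sub>v n
        \<longrightarrow> (\<forall>i\<in>{1..n+1}. c i = 0))"

definition Ymat :: "nat \<Rightarrow> (nat \<Rightarrow> real vec) \<Rightarrow> real mat" where
  "Ymat n y = mat (n+1) n (\<lambda>(i,j). (y (i+1) - y 0) $ j)"

definition Gmat :: "nat \<Rightarrow> (nat \<Rightarrow> real vec) \<Rightarrow> (nat \<Rightarrow> real) \<Rightarrow> real mat" where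
  "Gmat n y l = transpose_mat (Ymat n y)
      * mat (n+1) (n+1) (\<lambda>(i,j). if i = j then l (i+1) else 0) * Ymat n y"

text \<open>Number of negative barycentric coordinates among l_1..l_(n+1), i.e. |I_-| - 1.\<close>
definition nneg :: "nat \<Rightarrow> (nat \<Rightarrow> real) \<Rightarrow> nat" where
  "nneg n l = card {i\<in>{1..n+1}. l i < 0}"

definition Yminus :: "nat \<Rightarrow> (nat \<Rightarrow> real vec) \<Rightarrow> (nat \<Rightarrow> real) \<Rightarrow> real mat" where
  "Yminus n y l = mat (nneg n l) n (\<lambda>(i,j). Ymat n y $$ (n + 1 - nneg n l + i, j))"

end

theory Submission
  imports Defs "Jordan_Normal_Form.Determinant"
begin

lemma inj_imp_invertible:
  fixes A :: "real mat"
  assumes A: "A \<in> carrier_mat k k"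
    and inj: "\<And>c. c \<in> carrier_vec k \<Longrightarrow> A *\<^sub>v c = 0\<^sub>v k \<Longrightarrow> c = 0\<^sub>v k"
  shows "invertible_mat A"
proof -
  have "det A \<noteq> 0" using det_0_iff_vec_prod_zero_field[OF A] inj by blast
  from det_non_zero_imp_unit[OF A this, of "()"]
  obtain B where B: "B \<in> carrier_mat k k" "A * B = 1\<^sub>m k" "B * A = 1\<^sub>m k"
    unfolding Units_def ring_mat_def by auto
  show ?thesis unfolding invertible_mat_def inverts_mat_def square_mat.simps
    using A B by auto
qed

theorem lemma4p2:
  fixes n :: nat and y :: "nat \<Rightarrow> real vec" and l :: "nat \<Rightarrow> real" and P :: "real mat"
  assumes dim: "\<forall>i\<in>{0..n+1}. y i \<in> carrier_vec n"
    and indep: "aff_indep n y"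
    and bary_sum: "(\<Sum>i=1..n+1. l i) = 1"
    and bary_pt: "finsum_vec TYPE(real) n (\<lambda>i. l i \<cdot>\<^sub>v y i) {1..n+1} = y 0"
    and sorted: "\<forall>i j. 1 \<le> i \<and> i \<le> j \<and> j \<le> n+1 \<longrightarrow> l j \<le> l i"
    and P_dim: "P \<in> carrier_mat n (nneg n l)"
    and P_orth: "transpose_mat P * P = 1\<^sub>m (nneg n l)"
    and P_eig: "\<forall>j<nneg n l. \<exists>\<mu>::real. \<mu> < 0 \<and> Gmat n y l *\<^sub>v col P j = \<mu> \<cdot>\<^sub>v col P j"
  shows "invertible_mat (Yminus n y l * P)"
proof -
  define k where "k = nneg n l"
  define S where "S = {i\<in>{1..n+1}. l i < 0}"
  have kS: "k = card S" unfolding k_def S_def nneg_def by simp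
  have kle: "k \<le> n+1" unfolding kS S_def
    by (metis (no_types, lifting) card_atLeastAtMost card_mono diff_Suc_1 finite_atLeastAtMost mem_Collect_eq subsetI)
  have negidx: "n + 2 - k \<le> i" if i: "1 \<le> i" "i \<le> n+1" "l i < 0" for i
  proof -
    have "{i..n+1} \<subseteq> S" unfolding S_def using i sorted by fastforce
    hence "card {i..n+1} \<le> k" unfolding kS S_def by (intro card_mono) auto
    thus ?thesis by simp
  qed
  define Y where "Y = Ymat n y"
  define Dl where "Dl = mat (n+1) (n+1) (\<lambda>(i,j). if i = j then l (i+1) else (0::real))"
  define G where "G = Gmat n y l"
  have Y: "Y \<in> carrier_mat (n+1) n" unfolding Y_def Ymat_def by simp
  have Dl: "Dl \<in> carrier_mat (n+1) (n+1)" unfolding Dl_def by simp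
  have GG: "G = transpose_mat Y * Dl * Y" unfolding G_def Gmat_def Y_def Dl_def by simp
  have G: "G \<in> carrier_mat n n" unfolding GG using Y Dl by simp
  have P: "P \<in> carrier_mat n k" using P_dim k_def by simp
  have Ym: "Yminus n y l \<in> carrier_mat k n" unfolding Yminus_def k_def by simp
  from P_eig obtain mu where mu: "\<And>j. j < k \<Longrightarrow> mu j < 0 \<and> G *\<^sub>v col P j = mu j \<cdot>\<^sub>v col P j"
    unfolding k_def G_def by metis
  define D where "D = mat k k (\<lambda>(i,j). if i = j then mu j else (0::real))"
  have D: "D \<in> carrier_mat k k" unfolding D_def by simp
  have GP: "G * P = P * D"
  proof (rule eq_matI)
    fix i j assume ij: "i < dim_row (P * D)" "j < dim_col (P * D)"
    hence i: "i < n" and j: "j < k" using P D by auto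
    have "(G * P) $$ (i,j) = (G *\<^sub>v col P j) $ i" using G P i j by (simp add: mult_mat_vec_def)
    also have "\<dots> = mu j * P $$ (i,j)" using mu[OF j] P i j by simp
    also have "\<dots> = (P * D) $$ (i,j)"
    proof -
      have "(P * D) $$ (i,j) = (\<Sum>r\<in>{0..<k}. P $$ (i,r) * D $$ (r,j))"
        using P D i j by (simp add: scalar_prod_def)
      also have "\<dots> = (\<Sum>r\<in>{0..<k}. if r = j then P $$ (i,j) * mu j else 0)"
        by (rule sum.cong) (auto simp: D_def j)
      also have "\<dots> = P $$ (i,j) * mu j" using j by simp
      finally show ?thesis by simp
    qed
    finally show "(G * P) $$ (i,j) = (P * D) $$ (i,j)" .
  qed (use G P D in auto)
  show ?thesis
  proof (rule inj_imp_invertible[of _ k])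
    show "Yminus n y l * P \<in> carrier_mat k k" using Ym P by simp
  next
    fix c assume c: "c \<in> carrier_vec k" and Ac: "Yminus n y l * P *\<^sub>v c = 0\<^sub>v k"
    define v where "v = P *\<^sub>v c"
    have v: "v \<in> carrier_vec n" unfolding v_def using P c by simp
    have Ymv: "Yminus n y l *\<^sub>v v = 0\<^sub>v k" using Ac unfolding v_def
      using assoc_mult_mat_vec[OF Ym P c] by simp
    have Dc: "D *\<^sub>v c \<in> carrier_vec k" using D c by simp
    have "G *\<^sub>v v = P *\<^sub>v (D *\<^sub>v c)"
      unfolding v_def using assoc_mult_mat_vec[OF G P c] GP assoc_mult_mat_vec[OF P D c] by simp
    hence "v \<bullet> (G *\<^sub>v v) = (P *\<^sub>v c) \<bullet> (P *\<^sub>v (D *\<^sub>v c))" unfolding v_def by simp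
    also have "\<dots> = (transpose_mat P *\<^sub>v (P *\<^sub>v (D *\<^sub>v c))) \<bullet> c"
      using transpose_vec_mult_scalar[OF P c, of "P *\<^sub>v (D *\<^sub>v c)"] P Dc c
        comm_scalar_prod[of "P *\<^sub>v c" n "P *\<^sub>v (D *\<^sub>v c)"]
      by simp
    also have "transpose_mat P *\<^sub>v (P *\<^sub>v (D *\<^sub>v c)) = D *\<^sub>v c"
      using assoc_mult_mat_vec[of "transpose_mat P" k n P k "D *\<^sub>v c"] P Dc P_orth k_def by simp
    also have "(D *\<^sub>v c) \<bullet> c = (\<Sum>j<k. mu j * (c $ j)^2)"
    proof -
      have "(D *\<^sub>v c) \<bullet> c = (\<Sum>j\<in>{0..<k}. (D *\<^sub>v c) $ j * c $ j)" using c unfolding scalar_prod_def by simp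
      also have "\<dots> = (\<Sum>j\<in>{0..<k}. mu j * (c $ j)^2)"
      proof (rule sum.cong)
        fix j assume j: "j \<in> {0..<k}"
        have "(D *\<^sub>v c) $ j = (\<Sum>r\<in>{0..<k}. D $$ (j,r) * c $ r)" using D c j
          by (simp add: mult_mat_vec_def scalar_prod_def)
        also have "\<dots> = (\<Sum>r\<in>{0..<k}. if r = j then mu j * c $ j else 0)"
          by (rule sum.cong) (use j in \<open>auto simp: D_def\<close>)
        also have "\<dots> = mu j * c $ j" using j by simp
        finally show "(D *\<^sub>v c) $ j * c $ j = mu j * (c $ j)^2" by (simp add: power2_eq_square)
      qed simp
      finally show ?thesis by (simp add: atLeast0LessThan)
    qed
    finally have eq1: "v \<bullet> (G *\<^sub>v v) = (\<Sum>j<k. mu j * (c $ j)^2)" .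
    define u where "u = Y *\<^sub>v v"
    have u: "u \<in> carrier_vec (n+1)" unfolding u_def using Y v by simp
    have Du: "Dl *\<^sub>v u \<in> carrier_vec (n+1)" using Dl u by simp
    have "G *\<^sub>v v = transpose_mat Y *\<^sub>v (Dl *\<^sub>v u)"
    proof -
      have "transpose_mat Y * Dl * Y *\<^sub>v v = (transpose_mat Y * Dl) *\<^sub>v (Y *\<^sub>v v)"
        using Y Dl v by (intro assoc_mult_mat_vec) auto
      also have "\<dots> = transpose_mat Y *\<^sub>v (Dl *\<^sub>v (Y *\<^sub>v v))"
        using Y Dl v by (intro assoc_mult_mat_vec) auto
      finally show ?thesis unfolding GG u_def by simp
    qed
    hence "v \<bullet> (G *\<^sub>v v) = u \<bullet> (Dl *\<^sub>v u)"
      using transpose_vec_mult_scalar[OF Y v Du] v Du Y u comm_scalar_prod[OF Du u]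
        comm_scalar_prod[of v n "transpose_mat Y *\<^sub>v (Dl *\<^sub>v u)"] unfolding u_def
      by simp
    also have "\<dots> = (\<Sum>i\<in>{0..<n+1}. l (i+1) * (u $ i)^2)"
    proof -
      have "u \<bullet> (Dl *\<^sub>v u) = (\<Sum>i\<in>{0..<n+1}. u $ i * (Dl *\<^sub>v u) $ i)" unfolding scalar_prod_def carrier_vecD[OF Du] by (rule refl)
      also have "\<dots> = (\<Sum>i\<in>{0..<n+1}. l (i+1) * (u $ i)^2)"
      proof (rule sum.cong)
        fix i assume i: "i \<in> {0..<n+1}"
        have "(Dl *\<^sub>v u) $ i = (\<Sum>r\<in>{0..<n+1}. Dl $$ (i,r) * u $ r)" using Dl u i
          by (simp add: mult_mat_vec_def scalar_prod_def)
        also have "\<dots> = (\<Sum>r\<in>{0..<n+1}. if r = i then l (i+1) * u $ i else 0)"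
          by (rule sum.cong) (use i in \<open>auto simp: Dl_def\<close>)
        also have "\<dots> = l (i+1) * u $ i" using i by simp
        finally show "u $ i * (Dl *\<^sub>v u) $ i = l (i+1) * (u $ i)^2" by (simp add: power2_eq_square)
      qed simp
      finally show ?thesis .
    qed
    also have "\<dots> \<ge> 0"
    proof (rule sum_nonneg)
      fix i assume i: "i \<in> {0..<n+1}"
      show "0 \<le> l (i+1) * (u $ i)^2"
      proof (cases "l (i+1) < 0")
        case False thus ?thesis by simp
      next
        case True
        with negidx[of "i+1"] i have ge: "n + 1 - k \<le> i" by auto
        define t where "t = i - (n + 1 - k)"
        have t: "t < k" "i = n + 1 - k + t" using ge i kle unfolding t_def by auto
        have "(Yminus n y l *\<^sub>v v) $ t = row (Yminus n y l) t \<bullet> v" using Ym t by simp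
        also have "row (Yminus n y l) t = row Y i"
          using t Y i unfolding Yminus_def Y_def k_def by (intro eq_vecI) (auto simp: Ymat_def)
        also have "row Y i \<bullet> v = u $ i" unfolding u_def using Y i by simp
        finally have "u $ i = 0" using Ymv t by simp
        thus ?thesis by simp
      qed
    qed
    finally have ge0: "(\<Sum>j<k. mu j * (c $ j)^2) \<ge> 0" using eq1 by simp
    show "c = 0\<^sub>v k"
    proof (rule ccontr)
      assume "c \<noteq> 0\<^sub>v k"
      then obtain j where j: "j < k" "c $ j \<noteq> 0" using c by (metis eq_vecI index_zero_vec(1,2) carrier_vecD)
      have "(\<Sum>j<k. mu j * (c $ j)^2) < 0"
      proof -
        have "(\<Sum>j<k. mu j * (c $ j)^2) < (\<Sum>j<k. (0::real))"
        proof (rule sum_strict_mono_ex1)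
          show "\<forall>x\<in>{..<k}. mu x * (c $ x)^2 \<le> 0"
            using mu by (meson lessThan_iff less_imp_le mult_nonpos_nonneg zero_le_power2)
          show "\<exists>a\<in>{..<k}. mu a * (c $ a)^2 < 0"
            using j mu[OF j(1)] by (auto intro!: bexI[of _ j] mult_neg_pos)
        qed simp
        thus ?thesis by simp
      qed
      with ge0 show False by simp
    qed
  qed
qed

end
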